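(* Let $C\subset\mathbb{R}^d$ be an origin-symmetric $d$-polytope and let $\Lambda\subset\mathbb{R}^d$ be a $d$-dimensional lattice, and let $C^\star=\{y: x\cdot y\le1\ \forall x\in C\}$ be the polar body. (1) The width directions of $C$ with respect to $\Lambda$ are exactly the diameter directions of $C^\star$ with respect to $\Lambda^\star$. (2) $C$ is lattice reduced with respect to $\Lambda$ if and only if $C^\star$ is lattice complete with respect to $\Lambda^\star$.
   Context: A lattice $\Lambda\subset\mathbb{R}^d$ is a discrete subgroup spanning $\mathbb{R}^d$; $\Lambda^\star=\{y: x\cdot y\in\mathbb{Z}\ \forall x\in\Lambda\}$ is its dual lattice. For a convex body $K$ (compact convex, non-empty interior) and a lattice $\Gamma$: the lattice width is $\mathrm{wdt}_\Gamma(K)=\min_{y\in\Gamma^\star\setminus\{0\}}\max_{a,b\in K}y\cdot(a-b)$, and width directions are the $y\in\Gamma^\star\setminus\{0\}$ attaining it. A segment $[a,b]$ is a lattice segment w.r.t. $\Gamma$ if $b-a$ is parallel to a nonzero vector of $\Gamma$; its lattice length is $|b-a|/|v|$ with $v$ the generator of $\Gamma\cap\mathrm{span}\{b-a\}$ that is a positive multiple of $b-a$; $\mathrm{diam}_\Gamma(K)$ is the maximal lattice length of a lattice segment in $K$; diameter directions are the $v\in\Gamma\setminus\{0\}$ such that $K$ contains a segment $[a,a+\mathrm{diam}_\Gamma(K)v]$. $K$ is lattice reduced w.r.t. $\Gamma$ if no convex body $K'\subsetneq K$ has the same lattice width; lattice complete if no convex body $K'\supsetneq K$ has the same lattice diameter.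 *)

theory Defs
  imports "HOL-Analysis.Analysis"
begin

definition is_lattice :: "'a::euclidean_space set \<Rightarrow> bool" where
  "is_lattice L \<longleftrightarrow>
     0 \<in> L \<and> (\<forall>x\<in>L. \<forall>y\<in>L. x + y \<in> L) \<and> (\<forall>x\<in>L. - x \<in> L) \<and>
     (\<forall>x\<in>L. \<exists>e>0. ball x e \<inter> L = {x}) \<and>
     span L = UNIV"

definition dual_lattice :: "'a::euclidean_space set \<Rightarrow> 'a set" where
  "dual_lattice L = {y. \<forall>x\<in>L. x \<bullet> y \<in> \<int>}"

definition convex_body :: "'a::euclidean_space set \<Rightarrow> bool" where
  "convex_body K \<longleftrightarrow> compact K \<and> convex K \<and> interior K \<noteq> {}"

definition polar :: "'a::euclidean_space set \<Rightarrow> 'a set" where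
  "polar C = {y. \<forall>x\<in>C. x \<bullet> y \<le> 1}"

definition width_fun :: "'a::euclidean_space set \<Rightarrow> 'a \<Rightarrow> real" where
  "width_fun K y = Sup {y \<bullet> (a - b) | a b. a \<in> K \<and> b \<in> K}"

definition lattice_width :: "'a::euclidean_space set \<Rightarrow> 'a set \<Rightarrow> real" where
  "lattice_width G K = Inf (width_fun K ` (dual_lattice G - {0}))"

definition width_directions :: "'a::euclidean_space set \<Rightarrow> 'a set \<Rightarrow> 'a set" where
  "width_directions G K =
     {y \<in> dual_lattice G - {0}. width_fun K y = lattice_width G K}"

definition lattice_generator :: "'a::euclidean_space set \<Rightarrow> 'a \<Rightarrow> 'a \<Rightarrow> bool" where
  "lattice_generator G u v \<longleftrightarrow>
     v \<in> G \<and> v \<noteq> 0 \<and> (\<exists>s>0. v = s *\<^sub>R u) \<and>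
     G \<inter> span {u} = range (\<lambda>k::int. of_int k *\<^sub>R v)"

definition lattice_segment :: "'a::euclidean_space set \<Rightarrow> 'a \<Rightarrow> 'a \<Rightarrow> bool" where
  "lattice_segment G a b \<longleftrightarrow> (\<exists>v\<in>G. v \<noteq> 0 \<and> (\<exists>t. b - a = t *\<^sub>R v))"

definition lattice_length :: "'a::euclidean_space set \<Rightarrow> 'a \<Rightarrow> 'a \<Rightarrow> real" where
  "lattice_length G a b = norm (b - a) / norm (THE v. lattice_generator G (b - a) v)"

definition lattice_diameter :: "'a::euclidean_space set \<Rightarrow> 'a set \<Rightarrow> real" where
  "lattice_diameter G K =
     Sup {lattice_length G a b | a b. closed_segment a b \<subseteq> K \<and> a \<noteq> b \<and> lattice_segment G a b}"

definition diameter_directions :: "'a::euclidean_space set \<Rightarrow> 'a set \<Rightarrow> 'a set" where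
  "diameter_directions G K =
     {v \<in> G - {0}. \<exists>a. closed_segment a (a + lattice_diameter G K *\<^sub>R v) \<subseteq> K}"

definition lattice_reduced :: "'a::euclidean_space set \<Rightarrow> 'a set \<Rightarrow> bool" where
  "lattice_reduced G K \<longleftrightarrow>
     \<not> (\<exists>K'. convex_body K' \<and> K' \<subset> K \<and> lattice_width G K' = lattice_width G K)"

definition lattice_complete :: "'a::euclidean_space set \<Rightarrow> 'a set \<Rightarrow> bool" where
  "lattice_complete G K \<longleftrightarrow>
     \<not> (\<exists>K'. convex_body K' \<and> K \<subset> K' \<and> lattice_diameter G K' = lattice_diameter G K)"

end

theory Submission
  imports Defs
begin

lemma dual_zero: "0 \<in> dual_lattice L"
  by (simp add: dual_lattice_def)
lemma dual_add: "x \<in> dual_lattice L \<Longrightarrow> y \<in> dual_lattice L \<Longrightarrow> x + y \<in> dual_lattice L"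
  by (auto simp: dual_lattice_def inner_add_right)
lemma dual_uminus: "x \<in> dual_lattice L \<Longrightarrow> - x \<in> dual_lattice L"
  by (auto simp: dual_lattice_def)
lemma dual_diff: "x \<in> dual_lattice L \<Longrightarrow> y \<in> dual_lattice L \<Longrightarrow> x - y \<in> dual_lattice L"
  by (auto simp: dual_lattice_def inner_diff_right)
lemma dual_intmult: "x \<in> dual_lattice L \<Longrightarrow> of_int k *\<^sub>R x \<in> dual_lattice L"
  by (auto simp: dual_lattice_def)

lemma generator_unique:
  assumes "lattice_generator G u g" "lattice_generator G u g'"
  shows "g = g'"
proof -
  from assms obtain s s' where s: "s > 0" "g = s *\<^sub>R u" and s': "s' > 0" "g' = s' *\<^sub>R u"
    and gG: "g \<in> G" "g' \<in> G" and nz: "g \<noteq> 0"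
    and eq: "G \<inter> span {u} = range (\<lambda>k::int. of_int k *\<^sub>R g)"
    unfolding lattice_generator_def by blast
  have "g' \<in> G \<inter> span {u}" using s' gG by (simp add: span_base span_mul)
  with eq obtain k :: int where k: "g' = of_int k *\<^sub>R g" by auto
  have "g \<in> G \<inter> span {u}" using s gG by (simp add: span_base span_mul)
  with assms(2) obtain k' :: int where k': "g = of_int k' *\<^sub>R g'"
    unfolding lattice_generator_def by auto
  have u0: "u \<noteq> 0" using nz s by auto
  have "s' = of_int k * s" using k s s' u0
    by (metis scaleR_cancel_right scaleR_scaleR)
  hence "0 < real_of_int k * s" using s' by simp
  hence "0 < real_of_int k" using s by (simp add: zero_less_mult_iff)
  hence kpos: "k > 0" by simp
  have "g = of_int k' *\<^sub>R g'" by (rule k')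
  also have "\<dots> = of_int k' *\<^sub>R (of_int k *\<^sub>R g)" by (simp only: k)
  also have "\<dots> = (real_of_int k' * real_of_int k) *\<^sub>R g" by (simp only: scaleR_scaleR)
  finally have eq: "g = (real_of_int k' * real_of_int k) *\<^sub>R g" .
  have "(real_of_int k' * real_of_int k - 1) *\<^sub>R g = (real_of_int k' * real_of_int k) *\<^sub>R g - g"
    by (simp only: scaleR_diff_left scaleR_one)
  also have "\<dots> = 0" using eq by (metis right_minus_eq)
  finally have "real_of_int k' * real_of_int k - 1 = 0" using nz by (simp only: scaleR_eq_0_iff) blast
  hence "of_int k' * of_int k = (1::real)" by simp
  hence "k' * k = 1" by (metis of_int_eq_1_iff of_int_mult)
  hence "k = 1" using kpos by (simp add: zmult_eq_1_iff)
  thus ?thesis using k by simp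
qed

lemma lattice_length_gen:
  assumes "lattice_generator G (b - a) g"
  shows "lattice_length G a b = norm (b - a) / norm g"
proof -
  have "(THE v. lattice_generator G (b - a) v) = g"
    using assms generator_unique by blast
  thus ?thesis by (simp add: lattice_length_def)
qed

lemma finite_pos_lower:
  assumes "finite F" "\<And>x. x \<in> F \<Longrightarrow> 0 < f x"
  shows "\<exists>e>0. \<forall>x\<in>F. e \<le> (f x :: real)"
proof -
  have "finite (insert 1 (f ` F))" using assms by simp
  moreover have "\<forall>z\<in>insert 1 (f ` F). 0 < z" using assms by auto
  ultimately have "0 < Min (insert 1 (f ` F))" by (simp add: Min_gr_iff)
  moreover have "\<forall>x\<in>F. Min (insert 1 (f ` F)) \<le> f x" using assms(1) by (auto intro!: Min_le)
  ultimately show ?thesis by blast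
qed

lemma dual_finite_bounded:
  fixes L :: "'a::euclidean_space set"
  assumes "span L = UNIV"
  shows "finite {y \<in> dual_lattice L. norm y \<le> Rb}"
proof -
  obtain B where B: "B \<subseteq> L" "independent B" "L \<subseteq> span B"
    by (rule basis_exists)
  have fB: "finite B" using B(2) independent_imp_finite by blast
  have "span L \<subseteq> span B" by (rule span_minimal[OF B(3) subspace_span])
  hence spB: "span B = UNIV" using assms by auto
  define M where "M = (\<Sum>b\<in>B. norm b) * \<bar>Rb\<bar>"
  define F where "F = (of_int ` {-\<lceil>M\<rceil>..\<lceil>M\<rceil>} :: real set)"
  define f where "f = (\<lambda>y::'a. restrict (\<lambda>b. b \<bullet> y) B)"
  have inj: "inj f"
  proof (rule injI)
    fix x y assume eq: "f x = f y"
    have o: "orthogonal (x - y) b" if "b \<in> B" for b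
    proof -
      have "f x b = f y b" using eq by simp
      thus ?thesis using that by (simp add: f_def orthogonal_def inner_diff_left inner_diff_right inner_commute)
    qed
    have "x - y \<in> span B" using spB by simp
    hence "orthogonal (x - y) (x - y)"
      by (rule orthogonal_to_span) (rule o)
    thus "x = y" by (simp add: orthogonal_def)
  qed
  have "f ` {y \<in> dual_lattice L. norm y \<le> Rb} \<subseteq> (\<Pi>\<^sub>E b\<in>B. F)"
  proof
    fix z assume "z \<in> f ` {y \<in> dual_lattice L. norm y \<le> Rb}"
    then obtain y where y: "y \<in> dual_lattice L" "norm y \<le> Rb" "z = f y" by auto
    have "b \<bullet> y \<in> F" if "b \<in> B" for b
    proof -
      have "b \<bullet> y \<in> \<int>" using y(1) that B(1) by (auto simp: dual_lattice_def)
      then obtain k where k: "b \<bullet> y = of_int k" by (auto elim: Ints_cases)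
      have "\<bar>b \<bullet> y\<bar> \<le> norm b * norm y" by (simp add: Cauchy_Schwarz_ineq2)
      also have "\<dots> \<le> norm b * \<bar>Rb\<bar>" using y(2) by (simp add: mult_left_mono)
      also have "\<dots> \<le> M" unfolding M_def
        by (intro mult_right_mono member_le_sum) (use that fB in auto)
      finally have "\<bar>of_int k\<bar> \<le> M" using k by simp
      hence "of_int \<bar>k\<bar> \<le> M" by simp
      hence "\<bar>k\<bar> \<le> \<lceil>M\<rceil>" by (simp add: le_ceiling_iff)
      hence "k \<in> {-\<lceil>M\<rceil>..\<lceil>M\<rceil>}" by (simp add: abs_le_iff)
      thus ?thesis unfolding F_def k by (rule imageI)
    qed
    thus "z \<in> (\<Pi>\<^sub>E b\<in>B. F)" using y(3) by (auto simp: f_def)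
  qed
  moreover have "finite (\<Pi>\<^sub>E b\<in>B. F)" using fB by (intro finite_PiE) (auto simp: F_def)
  ultimately have "finite (f ` {y \<in> dual_lattice L. norm y \<le> Rb})" by (rule finite_subset)
  thus ?thesis using finite_imageD[OF _ inj_on_subset[OF inj subset_UNIV]] by blast
qed

locale sympoly =
  fixes C :: "'a::euclidean_space set" and L :: "'a set"
  assumes poly: "polytope C" and intC: "interior C \<noteq> {}" and symC: "\<forall>x\<in>C. - x \<in> C"
    and lat: "is_lattice L"
begin

definition "S = {x. x extreme_point_of C}"
definition "h y = Max ((\<lambda>u. u \<bullet> y) ` S)"

lemma compC: "compact C" using poly polytope_imp_compact by blast
lemma convC: "convex C" using poly polytope_imp_convex by blast
lemma spanL: "span L = UNIV" using lat by (simp add: is_lattice_def)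
lemma negC: "x \<in> C \<Longrightarrow> - x \<in> C" using symC by blast

lemma ball0: obtains r where "r > 0" "ball 0 r \<subseteq> C"
proof -
  obtain x where "x \<in> interior C" using intC by blast
  then obtain e where e: "e > 0" "ball x e \<subseteq> C" by (auto simp: mem_interior)
  have "ball 0 e \<subseteq> C"
  proof
    fix z assume "z \<in> ball (0::'a) e"
    hence nz: "norm z < e" by simp
    have "x + z \<in> ball x e" using nz by (simp add: dist_norm)
    hence 1: "x + z \<in> C" using e by blast
    have "x - z \<in> ball x e" using nz by (simp add: dist_norm)
    hence "x - z \<in> C" using e by blast
    hence 2: "z - x \<in> C" using negC by fastforce
    have "(1/2) *\<^sub>R (x + z) + (1/2) *\<^sub>R (z - x) \<in> C"
      using convexD[OF convC 1 2, of "1/2" "1/2"] by simp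
    moreover have "(1/2) *\<^sub>R (x + z) + (1/2) *\<^sub>R (z - x) = z"
      by (simp add: scaleR_add_right scaleR_diff_right) (simp add: scaleR_add_left[symmetric])
    ultimately show "z \<in> C" by simp
  qed
  thus ?thesis using e that by blast
qed

lemma zero_int: "0 \<in> interior C"
proof -
  obtain r where "r > 0" "ball 0 r \<subseteq> C" using ball0 by blast
  thus ?thesis by (meson centre_in_ball interior_maximal open_ball subsetD)
qed

lemma zeroC: "0 \<in> C" using zero_int interior_subset by blast

lemma boundC: obtains R where "R > 0" "\<And>x. x \<in> C \<Longrightarrow> norm x \<le> R"
  using compact_imp_bounded[OF compC] bounded_pos by metis

lemma S_fin: "finite S"
  unfolding S_def using finite_polyhedron_extreme_points polytope_imp_polyhedron poly by blast

lemma C_hull: "C = convex hull S"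
  unfolding S_def using Krein_Milman_Minkowski compC convC by blast

lemma S_sub: "S \<subseteq> C" unfolding S_def extreme_point_of_def by blast

lemma S_ne: "S \<noteq> {}" using C_hull zeroC by auto

lemma expose:
  assumes "v \<in> S"
  obtains a b where "a \<noteq> 0" "\<And>x. x \<in> C \<Longrightarrow> a \<bullet> x \<le> b" "a \<bullet> v = b"
    "\<And>x. x \<in> C \<Longrightarrow> a \<bullet> x = b \<Longrightarrow> x = v"
proof -
  have "{v} face_of C" using assms by (simp add: S_def face_of_singleton)
  hence ex: "{v} exposed_face_of C"
    using exposed_face_of_polyhedron polytope_imp_polyhedron poly by blast
  have "{v} \<noteq> C" using intC by auto
  then obtain a b where "a \<noteq> 0" "C \<subseteq> {x. a \<bullet> x \<le> b}" "{v} = C \<inter> {x. a \<bullet> x = b}"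
    using ex unfolding exposed_face_of by blast
  thus ?thesis using that by blast
qed

lemma S_sym: assumes "v \<in> S" shows "- v \<in> S"
proof -
  obtain a b where ab: "\<And>x. x \<in> C \<Longrightarrow> a \<bullet> x \<le> b" "a \<bullet> v = b"
    "\<And>x. x \<in> C \<Longrightarrow> a \<bullet> x = b \<Longrightarrow> x = v" using expose assms by blast
  have vC: "v \<in> C" using assms S_sub by blast
  have "C \<inter> {x. (- a) \<bullet> x = b} = {- v}"
  proof
    show "C \<inter> {x. (- a) \<bullet> x = b} \<subseteq> {- v}"
    proof
      fix x assume x: "x \<in> C \<inter> {x. (- a) \<bullet> x = b}"
      hence "- x = v" using ab(3)[of "- x"] negC by auto
      thus "x \<in> {- v}" by auto
    qed
    show "{- v} \<subseteq> C \<inter> {x. (- a) \<bullet> x = b}" using vC negC ab(2) by auto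
  qed
  moreover have "\<And>x. x \<in> C \<Longrightarrow> (- a) \<bullet> x \<le> b" using ab(1) negC by (metis inner_minus_left inner_minus_right)
  ultimately have "(- v) extreme_point_of C" by (rule extreme_point_of_Int_supporting_hyperplane_le)
  thus ?thesis by (simp add: S_def)
qed

lemma S_nz: "v \<in> S \<Longrightarrow> v \<noteq> 0"
  using zero_int extreme_point_not_in_interior unfolding S_def by blast

lemma hull_le: assumes "\<And>u. u \<in> S \<Longrightarrow> u \<bullet> y \<le> M" "x \<in> C" shows "x \<bullet> y \<le> M"
proof -
  have "S \<subseteq> {x. y \<bullet> x \<le> M}" using assms(1) by (auto simp: inner_commute)
  moreover have "convex {x. y \<bullet> x \<le> M}" by (rule convex_halfspace_le)
  ultimately have "convex hull S \<subseteq> {x. y \<bullet> x \<le> M}" by (rule hull_minimal)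
  thus ?thesis using assms(2) C_hull by (auto simp: inner_commute)
qed

lemma h_att: "\<exists>u\<in>S. u \<bullet> y = h y"
proof -
  have "Max ((\<lambda>u. u \<bullet> y) ` S) \<in> (\<lambda>u. u \<bullet> y) ` S" by (rule Max_in) (use S_fin S_ne in auto)
  thus ?thesis by (auto simp: h_def)
qed

lemma h_geS: "u \<in> S \<Longrightarrow> u \<bullet> y \<le> h y"
  unfolding h_def using S_fin by auto

lemma h_ge: "x \<in> C \<Longrightarrow> x \<bullet> y \<le> h y"
  using hull_le h_geS by blast

lemma h_eqI: assumes "\<And>u. u \<in> S \<Longrightarrow> u \<bullet> y \<le> M" "u0 \<in> S" "u0 \<bullet> y = M" shows "h y = M"
  using h_att[of y] h_geS[OF assms(2), of y] assms by force

lemma h_scale: assumes "c \<ge> 0" shows "h (c *\<^sub>R y) = c * h y"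
proof -
  obtain u where u: "u \<in> S" "u \<bullet> y = h y" using h_att by blast
  show ?thesis
    by (rule h_eqI[OF _ u(1)]) (use u h_geS assms in \<open>auto intro: mult_left_mono\<close>)
qed

lemma h_neg: "h (- y) = h y"
proof -
  obtain u where u: "u \<in> S" "u \<bullet> y = h y" using h_att by blast
  show ?thesis
  proof (rule h_eqI[OF _ S_sym[OF u(1)]])
    fix w assume "w \<in> S" thus "w \<bullet> - y \<le> h y" using h_geS[OF S_sym[OF \<open>w \<in> S\<close>], of y] by simp
  qed (use u in simp)
qed

lemma h_lower: obtains r where "r > 0" "\<And>y. r * norm y \<le> h y"
proof -
  obtain r where r: "r > 0" "ball 0 r \<subseteq> C" using ball0 by blast
  have "(r/2) * norm y \<le> h y" for y
  proof (cases "y = 0")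
    case True
    obtain u where "u \<in> S" "u \<bullet> y = h y" using h_att by blast
    thus ?thesis using True by simp
  next
    case False
    define x where "x = ((r/2) / norm y) *\<^sub>R y"
    have "norm x = r/2" using False r by (simp add: x_def)
    hence "x \<in> C" using r by auto
    hence "x \<bullet> y \<le> h y" by (rule h_ge)
    moreover have "x \<bullet> y = (r/2) * norm y" using False
      by (simp add: x_def power2_norm_eq_inner[symmetric] power2_eq_square)
    ultimately show ?thesis by simp
  qed
  thus ?thesis using that r by (meson half_gt_zero)
qed

lemma h_upper: obtains R where "R > 0" "\<And>y. h y \<le> R * norm y"
proof -
  obtain R where R: "R > 0" "\<And>x. x \<in> C \<Longrightarrow> norm x \<le> R" using boundC by blast
  have "h y \<le> R * norm y" for y
  proof -
    obtain u where u: "u \<in> S" "u \<bullet> y = h y" using h_att by blast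
    have "u \<bullet> y \<le> norm u * norm y" by (rule norm_cauchy_schwarz)
    also have "norm u \<le> R" using R(2) u(1) S_sub by blast
    hence "norm u * norm y \<le> R * norm y" by (rule mult_right_mono) simp
    finally show ?thesis using u by simp
  qed
  thus ?thesis using that R by blast
qed

lemma width_bdd: "bdd_above {y \<bullet> (a - b) |a b. a \<in> K \<and> b \<in> K}" if "K \<subseteq> C" for K y
proof -
  obtain R where R: "R > 0" "\<And>x. x \<in> C \<Longrightarrow> norm x \<le> R" using boundC by blast
  have "y \<bullet> (a - b) \<le> norm y * (2 * R)" if "a \<in> C" "b \<in> C" for a b
  proof -
    have "y \<bullet> (a - b) \<le> norm y * norm (a - b)" by (rule norm_cauchy_schwarz)
    also have "norm (a - b) \<le> 2 * R" using R(2)[OF that(1)] R(2)[OF that(2)] norm_triangle_ineq4[of a b] by linarith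
    hence "norm y * norm (a - b) \<le> norm y * (2 * R)" by (simp add: mult_left_mono)
    finally show ?thesis .
  qed
  thus ?thesis using \<open>K \<subseteq> C\<close> unfolding bdd_above_def by blast
qed

lemma width_ge: "K \<subseteq> C \<Longrightarrow> a \<in> K \<Longrightarrow> b \<in> K \<Longrightarrow> y \<bullet> (a - b) \<le> width_fun K y"
  unfolding width_fun_def by (rule cSup_upper) (auto intro: width_bdd)

lemma width_C: "width_fun C y = 2 * h y"
proof -
  obtain u where u: "u \<in> S" "u \<bullet> y = h y" using h_att by blast
  have uC: "u \<in> C" "- u \<in> C" using u S_sub negC by auto
  show ?thesis unfolding width_fun_def
  proof (rule cSup_eq_maximum)
    have e: "2 * h y = y \<bullet> (u - - u)" using u(2) by (simp add: inner_add_right inner_commute)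
    show "2 * h y \<in> {y \<bullet> (a - b) |a b. a \<in> C \<and> b \<in> C}"
      using uC e by blast
  next
    fix z assume "z \<in> {y \<bullet> (a - b) |a b. a \<in> C \<and> b \<in> C}"
    then obtain a b where ab: "a \<in> C" "b \<in> C" "z = y \<bullet> (a - b)" by blast
    have "a \<bullet> y \<le> h y" "(- b) \<bullet> y \<le> h y" using h_ge[OF ab(1)] h_ge[OF negC[OF ab(2)]] by auto
    thus "z \<le> 2 * h y" using ab by (simp add: inner_diff_right inner_commute)
  qed
qed

lemma polar_eq: "polar C = {z. \<forall>u\<in>S. u \<bullet> z \<le> 1}"
  unfolding polar_def using S_sub hull_le by blast

lemma polar_h: "z \<in> polar C \<longleftrightarrow> h z \<le> 1"
proof
  assume "z \<in> polar C"
  moreover obtain u where "u \<in> S" "u \<bullet> z = h z" using h_att by blast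
  ultimately show "h z \<le> 1" unfolding polar_eq by force
next
  assume "h z \<le> 1"
  thus "z \<in> polar C" unfolding polar_eq using h_geS order_trans by blast
qed

lemma polar_le: "z \<in> polar C \<Longrightarrow> x \<in> C \<Longrightarrow> x \<bullet> z \<le> 1"
  unfolding polar_def by blast

lemma polar_sym: "z \<in> polar C \<Longrightarrow> - z \<in> polar C"
  using polar_h h_neg by simp

lemma polar_int: obtains e where "e > 0" "ball 0 e \<subseteq> polar C"
proof -
  obtain R where R: "R > 0" "\<And>x. x \<in> C \<Longrightarrow> norm x \<le> R" using boundC by blast
  have "ball 0 (1/R) \<subseteq> polar C"
  proof
    fix z assume "z \<in> ball (0::'a) (1/R)"
    hence nz: "norm z < 1/R" by simp
    have "x \<bullet> z \<le> 1" if "x \<in> C" for x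
    proof -
      have "x \<bullet> z \<le> norm x * norm z" by (rule norm_cauchy_schwarz)
      also have "\<dots> \<le> R * norm z" using R that by (auto intro: mult_right_mono)
      also have "\<dots> \<le> 1" using nz R by (simp add: field_simps)
      finally show ?thesis .
    qed
    thus "z \<in> polar C" by (simp add: polar_def)
  qed
  thus ?thesis using R by (intro that[of "1/R"]) auto
qed

lemma polar_bound: obtains Rp where "Rp > 0" "\<And>z. z \<in> polar C \<Longrightarrow> norm z \<le> Rp"
proof -
  obtain r where r: "r > 0" "\<And>y. r * norm y \<le> h y" using h_lower by blast
  have "norm z \<le> 1/r" if "z \<in> polar C" for z
    using r(2)[of z] polar_h that r(1) by (simp add: field_simps)
  thus ?thesis using r by (intro that[of "1/r"]) auto
qed

lemma polar_Inter: "polar C = (\<Inter>u\<in>S. {z. u \<bullet> z \<le> 1})"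
  unfolding polar_eq by auto

lemma polar_convex: "convex (polar C)"
  unfolding polar_Inter by (intro convex_INT) (simp add: convex_halfspace_le)

lemma polar_closed: "closed (polar C)"
  unfolding polar_Inter by (intro closed_INT) (simp add: closed_halfspace_le)

lemma polar_compact: "compact (polar C)"
proof -
  obtain Rp where "Rp > 0" "\<And>z. z \<in> polar C \<Longrightarrow> norm z \<le> Rp" using polar_bound by blast
  hence "bounded (polar C)" unfolding bounded_iff by blast
  thus ?thesis using polar_closed by (simp add: compact_eq_bounded_closed)
qed

lemma polar_body: "convex_body (polar C)"
proof -
  obtain e where "e > 0" "ball 0 e \<subseteq> polar C" using polar_int by blast
  hence "interior (polar C) \<noteq> {}" by (metis centre_in_ball empty_iff interior_maximal open_ball subsetD)
  thus ?thesis using polar_convex polar_compact by (simp add: convex_body_def)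
qed

lemma dual_fin_h: "finite {y \<in> dual_lattice L. h y \<le> t}"
proof -
  obtain r where r: "r > 0" "\<And>y. r * norm y \<le> h y" using h_lower by blast
  have "{y \<in> dual_lattice L. h y \<le> t} \<subseteq> {y \<in> dual_lattice L. norm y \<le> t / r}"
    using r by (auto simp: field_simps intro: order_trans)
  thus ?thesis using dual_finite_bounded[OF spanL] finite_subset by blast
qed

end

context sympoly begin

lemma seg_len:
  assumes "a \<noteq> b" "lattice_segment (dual_lattice L) a b"
  obtains g s where "g \<in> dual_lattice L" "g \<noteq> 0" "s > 0" "b - a = s *\<^sub>R g"
    "lattice_length (dual_lattice L) a b = s"
proof -
  let ?D = "dual_lattice L"
  define u where "u = b - a"
  have u0: "u \<noteq> 0" using assms(1) by (simp add: u_def)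
  obtain w t where w: "w \<in> ?D" "w \<noteq> 0" "u = t *\<^sub>R w"
    using assms(2) by (auto simp: lattice_segment_def u_def)
  have t0: "t \<noteq> 0" using u0 w by auto
  define P where "P = {c. 0 < c \<and> c *\<^sub>R u \<in> ?D}"
  define c1 where "c1 = 1 / \<bar>t\<bar>"
  have c1pos: "c1 > 0" using t0 by (simp add: c1_def)
  have c1P: "c1 \<in> P"
  proof (cases "t > 0")
    case True
    hence "c1 *\<^sub>R u = w" using w(3) by (simp add: c1_def)
    thus ?thesis using w(1) c1pos by (simp add: P_def)
  next
    case False
    hence "t < 0" using t0 by simp
    hence "c1 *\<^sub>R u = - w" using w(3) by (simp add: c1_def)
    thus ?thesis using dual_uminus[OF w(1)] c1pos by (simp add: P_def)
  qed
  define Q where "Q = {c \<in> P. c \<le> c1}"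
  have finQ: "finite Q"
  proof -
    have "(\<lambda>c. c *\<^sub>R u) ` Q \<subseteq> {y \<in> ?D. norm y \<le> c1 * norm u}"
    proof
      fix y assume "y \<in> (\<lambda>c. c *\<^sub>R u) ` Q"
      then obtain c where c: "c \<in> P" "c \<le> c1" "y = c *\<^sub>R u" by (auto simp: Q_def)
      have "norm y = c * norm u" using c P_def by auto
      also have "\<dots> \<le> c1 * norm u" using c(2) by (simp add: mult_right_mono)
      finally show "y \<in> {y \<in> ?D. norm y \<le> c1 * norm u}" using c P_def by auto
    qed
    hence "finite ((\<lambda>c. c *\<^sub>R u) ` Q)"
      using dual_finite_bounded[OF spanL] finite_subset by blast
    moreover have "inj_on (\<lambda>c. c *\<^sub>R u) Q" using u0 by (auto simp: inj_on_def)
    ultimately show ?thesis using finite_imageD by blast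
  qed
  have c1Q: "c1 \<in> Q" using c1P by (simp add: Q_def)
  define c0 where "c0 = Min Q"
  have c0Q: "c0 \<in> Q" unfolding c0_def using finQ c1Q Min_in by blast
  have c0min: "c0 \<le> c" if "c \<in> P" for c
  proof (cases "c \<le> c1")
    case True
    hence "c \<in> Q" using that by (simp add: Q_def)
    thus ?thesis unfolding c0_def using finQ by simp
  next
    case False
    thus ?thesis using c0Q by (simp add: Q_def)
  qed
  have c0pos: "c0 > 0" and c0D: "c0 *\<^sub>R u \<in> ?D" using c0Q by (auto simp: Q_def P_def)
  define g where "g = c0 *\<^sub>R u"
  have gD: "g \<in> ?D" "g \<noteq> 0" using c0D c0pos u0 by (auto simp: g_def)
  have gen: "lattice_generator ?D u g"
    unfolding lattice_generator_def
  proof (intro conjI)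
    show "g \<in> ?D" "g \<noteq> 0" by (fact gD)+
    show "\<exists>s>0. g = s *\<^sub>R u" using c0pos g_def by blast
    show "?D \<inter> span {u} = range (\<lambda>k::int. of_int k *\<^sub>R g)"
    proof
      show "?D \<inter> span {u} \<subseteq> range (\<lambda>k::int. of_int k *\<^sub>R g)"
      proof
        fix z assume z: "z \<in> ?D \<inter> span {u}"
        then obtain \<tau> where tau: "z = \<tau> *\<^sub>R u" by (auto simp: span_singleton)
        define k where "k = \<lfloor>\<tau> / c0\<rfloor>"
        define \<rho> where "\<rho> = \<tau> - of_int k * c0"
        have "of_int k \<le> \<tau> / c0" "\<tau> / c0 < of_int k + 1" unfolding k_def by linarith+
        hence r1: "0 \<le> \<rho>" and r2: "\<rho> < c0" using c0pos by (auto simp: \<rho>_def field_simps)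
        have "\<rho> *\<^sub>R u = z - of_int k *\<^sub>R g"
          by (simp add: \<rho>_def tau g_def algebra_simps)
        moreover have "z - of_int k *\<^sub>R g \<in> ?D" using z dual_diff[OF _ dual_intmult[OF gD(1)]] by blast
        ultimately have "\<rho> *\<^sub>R u \<in> ?D" by simp
        hence "\<rho> = 0" using r1 r2 c0min[of \<rho>] by (force simp: P_def)
        hence "z = of_int k *\<^sub>R g" using tau by (simp add: \<rho>_def g_def)
        thus "z \<in> range (\<lambda>k::int. of_int k *\<^sub>R g)" by blast
      qed
      show "range (\<lambda>k::int. of_int k *\<^sub>R g) \<subseteq> ?D \<inter> span {u}"
      proof
        fix z assume "z \<in> range (\<lambda>k::int. of_int k *\<^sub>R g)"
        then obtain k :: int where k: "z = of_int k *\<^sub>R g" by blast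
        have "z = (of_int k * c0) *\<^sub>R u" by (simp add: k g_def)
        hence "z \<in> range (\<lambda>t. t *\<^sub>R u)" by blast
        hence "z \<in> span {u}" unfolding span_singleton .
        moreover have "z \<in> ?D" using k dual_intmult gD(1) by simp
        ultimately show "z \<in> ?D \<inter> span {u}" by blast
      qed
    qed
  qed
  have len: "lattice_length ?D a b = norm u / norm g"
    using lattice_length_gen gen u_def by blast
  also have "\<dots> = 1 / c0" using u0 c0pos by (simp add: g_def)
  finally have len': "lattice_length ?D a b = 1 / c0" .
  have "b - a = (1 / c0) *\<^sub>R g" using c0pos by (simp add: g_def u_def)
  thus ?thesis using that[OF gD _ _ len'] c0pos by simp
qed

lemma exists_m:
  assumes "\<exists>y\<in>dual_lattice L. y \<noteq> 0"
  shows "\<exists>m>0. (\<forall>y\<in>dual_lattice L. y \<noteq> 0 \<longrightarrow> m \<le> h y) \<and> (\<exists>y\<in>dual_lattice L. y \<noteq> 0 \<and> h y = m)"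
proof -
  obtain y1 where y1: "y1 \<in> dual_lattice L" "y1 \<noteq> 0" using assms by blast
  define F where "F = {y \<in> dual_lattice L. h y \<le> h y1} - {0}"
  have finF: "finite F" unfolding F_def using dual_fin_h by blast
  have y1F: "y1 \<in> F" using y1 by (simp add: F_def)
  define m where "m = Min (h ` F)"
  have "m \<in> h ` F" unfolding m_def using finF y1F by (intro Min_in) auto
  then obtain y0 where y0: "y0 \<in> F" "h y0 = m" by auto
  have mle: "m \<le> h y" if "y \<in> dual_lattice L" "y \<noteq> 0" for y
  proof (cases "h y \<le> h y1")
    case True
    hence "y \<in> F" using that by (simp add: F_def)
    thus ?thesis unfolding m_def using finF by simp
  next
    case False
    have "m \<le> h y1" unfolding m_def using finF y1F by simp
    thus ?thesis using False by simp
  qed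
  obtain r where r: "r > 0" "\<And>y. r * norm y \<le> h y" using h_lower by blast
  have "0 < r * norm y0" using r(1) y0(1) by (simp add: F_def)
  hence "m > 0" using r(2)[of y0] y0(2) by simp
  thus ?thesis using mle y0 by (auto simp: F_def)
qed

end

locale sympoly2 = sympoly +
  fixes m :: real
  assumes m_pos: "m > 0"
    and m_le: "\<And>y. y \<in> dual_lattice L \<Longrightarrow> y \<noteq> 0 \<Longrightarrow> m \<le> h y"
    and m_att: "\<exists>y\<in>dual_lattice L. y \<noteq> 0 \<and> h y = m"
begin

definition "W = {y \<in> dual_lattice L. y \<noteq> 0 \<and> h y = m}"

lemma m2: obtains m2 where "m2 > m"
  "\<And>y. y \<in> dual_lattice L \<Longrightarrow> y \<noteq> 0 \<Longrightarrow> h y > m \<Longrightarrow> m2 \<le> h y"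
proof -
  define F where "F = {y \<in> dual_lattice L. h y \<le> m + 1 \<and> m < h y}"
  have "finite F" unfolding F_def using dual_fin_h[of "m+1"] by (rule finite_subset[rotated]) auto
  then obtain e where e: "e > 0" "\<And>y. y \<in> F \<Longrightarrow> e \<le> h y - m"
    using finite_pos_lower[of F "\<lambda>y. h y - m"] by (auto simp: F_def)
  have "m + min e 1 \<le> h y" if "y \<in> dual_lattice L" "h y > m" for y
  proof (cases "h y \<le> m + 1")
    case True
    hence "y \<in> F" using that by (simp add: F_def)
    thus ?thesis using e(2)[of y] by linarith
  qed (linarith)
  thus ?thesis using e(1) by (intro that[of "m + min e 1"]) auto
qed

lemma lw: "lattice_width L C = 2 * m"
  unfolding lattice_width_def
proof (rule cInf_eq_minimum)
  obtain y0 where "y0 \<in> dual_lattice L" "y0 \<noteq> 0" "h y0 = m" using m_att by blast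
  thus "2 * m \<in> width_fun C ` (dual_lattice L - {0})" by (auto simp: width_C image_iff intro!: bexI[of _ y0])
next
  fix x assume "x \<in> width_fun C ` (dual_lattice L - {0})"
  then obtain y where y: "y \<in> dual_lattice L" "y \<noteq> 0" "x = width_fun C y" by blast
  thus "2 * m \<le> x" using m_le[OF y(1,2)] by (simp add: width_C)
qed

lemma wd: "width_directions L C = W"
  unfolding width_directions_def W_def lw width_C by auto

lemma W_neg: "y \<in> W \<Longrightarrow> - y \<in> W"
  unfolding W_def using dual_uminus h_neg by auto

lemma gen_W: assumes "y \<in> W" "c > 0" shows "lattice_generator (dual_lattice L) (c *\<^sub>R y) y"
  unfolding lattice_generator_def
proof (intro conjI)
  let ?D = "dual_lattice L"
  show yD: "y \<in> ?D" "y \<noteq> 0" using assms by (auto simp: W_def)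
  show "\<exists>s>0. y = s *\<^sub>R c *\<^sub>R y" using assms(2) by (intro exI[of _ "1/c"]) auto
  show "?D \<inter> span {c *\<^sub>R y} = range (\<lambda>k::int. of_int k *\<^sub>R y)"
  proof
    show "?D \<inter> span {c *\<^sub>R y} \<subseteq> range (\<lambda>k::int. of_int k *\<^sub>R y)"
    proof
      fix z assume z: "z \<in> ?D \<inter> span {c *\<^sub>R y}"
      then obtain \<tau> where tau: "z = \<tau> *\<^sub>R (c *\<^sub>R y)" by (auto simp: span_singleton)
      define k where "k = \<lfloor>\<tau> * c\<rfloor>"
      define \<rho> where "\<rho> = \<tau> * c - of_int k"
      have r1: "0 \<le> \<rho>" and r2: "\<rho> < 1" unfolding \<rho>_def k_def by linarith+
      have "\<rho> *\<^sub>R y = z - of_int k *\<^sub>R y" by (simp add: \<rho>_def tau algebra_simps)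
      moreover have "z - of_int k *\<^sub>R y \<in> ?D" using z dual_diff[OF _ dual_intmult[OF yD(1)]] by blast
      ultimately have rD: "\<rho> *\<^sub>R y \<in> ?D" by simp
      have "\<rho> = 0"
      proof (rule ccontr)
        assume "\<rho> \<noteq> 0"
        hence "\<rho> > 0" using r1 by simp
        hence "m \<le> h (\<rho> *\<^sub>R y)" using m_le[OF rD] yD by simp
        also have "h (\<rho> *\<^sub>R y) = \<rho> * m" using h_scale[OF r1] assms(1) by (simp add: W_def)
        finally have "m \<le> \<rho> * m" .
        thus False using r2 m_pos by (simp add: mult_le_cancel_right1)
      qed
      hence "z = of_int k *\<^sub>R y" using tau by (simp add: \<rho>_def)
      thus "z \<in> range (\<lambda>k::int. of_int k *\<^sub>R y)" by blast
    qed
    show "range (\<lambda>k::int. of_int k *\<^sub>R y) \<subseteq> ?D \<inter> span {c *\<^sub>R y}"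
    proof
      fix z assume "z \<in> range (\<lambda>k::int. of_int k *\<^sub>R y)"
      then obtain k :: int where k: "z = of_int k *\<^sub>R y" by blast
      have "z = (of_int k / c) *\<^sub>R (c *\<^sub>R y)" using assms(2) by (simp add: k)
      hence "z \<in> range (\<lambda>t. t *\<^sub>R (c *\<^sub>R y))" by blast
      hence "z \<in> span {c *\<^sub>R y}" unfolding span_singleton .
      moreover have "z \<in> ?D" using k dual_intmult yD(1) by simp
      ultimately show "z \<in> ?D \<inter> span {c *\<^sub>R y}" by blast
    qed
  qed
qed

lemma len_W:
  assumes "y \<in> W" "c > 0" "b - a = c *\<^sub>R y"
  shows "lattice_length (dual_lattice L) a b = c" "lattice_segment (dual_lattice L) a b" "a \<noteq> b"
proof -
  have y: "y \<in> dual_lattice L" "y \<noteq> 0" using assms(1) by (auto simp: W_def)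
  have "lattice_length (dual_lattice L) a b = norm (b - a) / norm y"
    using lattice_length_gen gen_W[OF assms(1,2)] assms(3) by metis
  thus "lattice_length (dual_lattice L) a b = c" using assms(2,3) y by simp
  show "lattice_segment (dual_lattice L) a b" unfolding lattice_segment_def using y assms(3) by blast
  show "a \<noteq> b" using assms(2,3) y by auto
qed

lemma len_bdd:
  assumes "bounded K"
  shows "bdd_above {lattice_length (dual_lattice L) a b |a b.
           closed_segment a b \<subseteq> K \<and> a \<noteq> b \<and> lattice_segment (dual_lattice L) a b}"
proof -
  obtain Rk where Rk: "\<And>x. x \<in> K \<Longrightarrow> norm x \<le> Rk" using assms bounded_iff by metis
  obtain R0 where R0: "R0 > 0" "\<And>y. h y \<le> R0 * norm y" using h_upper by blast
  have "lattice_length (dual_lattice L) a b \<le> 2 * Rk * R0 / m"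
    if ab: "closed_segment a b \<subseteq> K" "a \<noteq> b" "lattice_segment (dual_lattice L) a b" for a b
  proof -
    obtain g s where gs: "g \<in> dual_lattice L" "g \<noteq> 0" "s > 0" "b - a = s *\<^sub>R g"
      "lattice_length (dual_lattice L) a b = s" using seg_len[OF ab(2,3)] by blast
    have "a \<in> K" "b \<in> K" using ab(1) ends_in_segment by blast+
    hence "norm (b - a) \<le> 2 * Rk" using Rk[of a] Rk[of b] norm_triangle_ineq4[of b a] by linarith
    hence sg: "s * norm g \<le> 2 * Rk" using gs(3,4) by simp
    have "m \<le> R0 * norm g" using m_le[OF gs(1,2)] R0(2)[of g] by linarith
    hence "s * m \<le> s * (R0 * norm g)" using gs(3) by (simp add: mult_left_mono)
    also have "\<dots> = R0 * (s * norm g)" by simp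
    also have "\<dots> \<le> R0 * (2 * Rk)" using sg R0(1) by (simp add: mult_left_mono)
    finally have "s * m \<le> R0 * (2 * Rk)" .
    hence "s \<le> R0 * (2 * Rk) / m" using m_pos by (simp add: field_simps)
    thus ?thesis using gs(5) by (simp add: mult.commute mult.left_commute)
  qed
  thus ?thesis unfolding bdd_above_def by blast
qed

lemma diam_ge:
  assumes "bounded K" "closed_segment a b \<subseteq> K" "a \<noteq> b" "lattice_segment (dual_lattice L) a b"
  shows "lattice_length (dual_lattice L) a b \<le> lattice_diameter (dual_lattice L) K"
  unfolding lattice_diameter_def by (rule cSup_upper) (use assms len_bdd in auto)

lemma diam_eq:
  assumes "closed_segment a0 b0 \<subseteq> K" "a0 \<noteq> b0" "lattice_segment (dual_lattice L) a0 b0"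
    "lattice_length (dual_lattice L) a0 b0 = 2 / m"
    and "\<And>a b. closed_segment a b \<subseteq> K \<Longrightarrow> a \<noteq> b \<Longrightarrow> lattice_segment (dual_lattice L) a b
           \<Longrightarrow> lattice_length (dual_lattice L) a b \<le> 2 / m"
  shows "lattice_diameter (dual_lattice L) K = 2 / m"
  unfolding lattice_diameter_def
proof (rule cSup_eq_maximum)
  show "2 / m \<in> {lattice_length (dual_lattice L) a b |a b.
          closed_segment a b \<subseteq> K \<and> a \<noteq> b \<and> lattice_segment (dual_lattice L) a b}"
    using assms(1-4) by force
qed (use assms(5) in blast)

lemma W_polar_seg: assumes "y \<in> W"
  shows "closed_segment (- (1/m) *\<^sub>R y) ((1/m) *\<^sub>R y) \<subseteq> polar C"
proof -
  have hy: "h y = m" using assms by (simp add: W_def)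
  have 1: "(1/m) *\<^sub>R y \<in> polar C" using h_scale[of "1/m" y] hy m_pos by (simp add: polar_h)
  have 2: "- (1/m) *\<^sub>R y \<in> polar C" using polar_sym[OF 1] by simp
  show ?thesis using closed_segment_subset[OF 2 1 polar_convex] .
qed

lemma W_polar_len: assumes "y \<in> W"
  shows "lattice_length (dual_lattice L) (- (1/m) *\<^sub>R y) ((1/m) *\<^sub>R y) = 2 / m"
    "lattice_segment (dual_lattice L) (- (1/m) *\<^sub>R y) ((1/m) *\<^sub>R y)"
    "- (1/m) *\<^sub>R y \<noteq> (1/m) *\<^sub>R y"
proof -
  have e: "(1/m) *\<^sub>R y - - (1/m) *\<^sub>R y = (2/m) *\<^sub>R y" by (simp add: scaleR_2 flip: scaleR_add_left)
  show "lattice_length (dual_lattice L) (- (1/m) *\<^sub>R y) ((1/m) *\<^sub>R y) = 2 / m"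
    "lattice_segment (dual_lattice L) (- (1/m) *\<^sub>R y) ((1/m) *\<^sub>R y)"
    "- (1/m) *\<^sub>R y \<noteq> (1/m) *\<^sub>R y"
    using len_W[OF assms _ e] m_pos by auto
qed

lemma polar_seg0:
  assumes "a \<in> polar C" "b \<in> polar C" "b - a = s *\<^sub>R g" "s \<ge> 0"
  shows "s * h g \<le> 2"
proof -
  obtain u where u: "u \<in> S" "u \<bullet> g = h g" using h_att by blast
  have uC: "u \<in> C" "- u \<in> C" using u(1) S_sub negC by auto
  have "s * h g = u \<bullet> (b - a)" using u(2) assms(3) by simp
  also have "\<dots> = u \<bullet> b + (- u) \<bullet> a" by (simp add: inner_diff_right)
  also have "\<dots> \<le> 1 + 1" using polar_le[OF assms(2) uC(1)] polar_le[OF assms(1) uC(2)] by linarith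
  finally show ?thesis by simp
qed

lemma polar_seg:
  assumes "a \<in> polar C" "b \<in> polar C" "b - a = s *\<^sub>R g" "s > 0" "g \<in> dual_lattice L" "g \<noteq> 0"
  shows "s \<le> 2 / m"
proof -
  have "s * m \<le> s * h g" using m_le[OF assms(5,6)] assms(4) by (simp add: mult_left_mono)
  also have "\<dots> \<le> 2" using polar_seg0[OF assms(1-3)] assms(4) by simp
  finally show ?thesis using m_pos by (simp add: field_simps)
qed

lemma diam_polar: "lattice_diameter (dual_lattice L) (polar C) = 2 / m"
proof -
  obtain y0 where y0: "y0 \<in> W" using m_att by (auto simp: W_def)
  show ?thesis
  proof (rule diam_eq[OF W_polar_seg[OF y0] W_polar_len(3)[OF y0] W_polar_len(2)[OF y0] W_polar_len(1)[OF y0]])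
    fix a b assume ab: "closed_segment a b \<subseteq> polar C" "a \<noteq> b" "lattice_segment (dual_lattice L) a b"
    obtain g s where gs: "g \<in> dual_lattice L" "g \<noteq> 0" "s > 0" "b - a = s *\<^sub>R g"
      "lattice_length (dual_lattice L) a b = s" using seg_len[OF ab(2,3)] by blast
    have "a \<in> polar C" "b \<in> polar C" using ab(1) ends_in_segment by blast+
    thus "lattice_length (dual_lattice L) a b \<le> 2 / m" using polar_seg gs by metis
  qed
qed

lemma dd: "diameter_directions (dual_lattice L) (polar C) = W"
proof
  show "diameter_directions (dual_lattice L) (polar C) \<subseteq> W"
  proof
    fix v assume "v \<in> diameter_directions (dual_lattice L) (polar C)"
    then obtain a where v: "v \<in> dual_lattice L" "v \<noteq> 0"
      and seg: "closed_segment a (a + (2/m) *\<^sub>R v) \<subseteq> polar C"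
      unfolding diameter_directions_def diam_polar by blast
    have "a \<in> polar C" "a + (2/m) *\<^sub>R v \<in> polar C" using seg ends_in_segment by blast+
    hence "(2/m) * h v \<le> 2" using polar_seg0[of a "a + (2/m) *\<^sub>R v" "2/m" v] m_pos by simp
    hence "h v \<le> m" using m_pos by (simp add: field_simps)
    thus "v \<in> W" using m_le[OF v] v by (simp add: W_def)
  qed
  show "W \<subseteq> diameter_directions (dual_lattice L) (polar C)"
  proof
    fix v assume v: "v \<in> W"
    have e0: "- (1/m) + 2/m = 1/m" by simp
    have e: "- (1/m) *\<^sub>R v + (2/m) *\<^sub>R v = (1/m) *\<^sub>R v" using e0 by (metis scaleR_add_left)
    have "closed_segment (- (1/m) *\<^sub>R v) (- (1/m) *\<^sub>R v + (2/m) *\<^sub>R v) \<subseteq> polar C"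
      unfolding e by (rule W_polar_seg[OF v])
    thus "v \<in> diameter_directions (dual_lattice L) (polar C)"
      using v unfolding diameter_directions_def diam_polar W_def by blast
  qed
qed

end

lemma arith_cut:
  fixes c t :: real
  assumes "c < 1" "0 \<le> t" "t \<le> (1 - c) / (\<bar>c\<bar> + 1)"
  shows "(1 + t) * c \<le> 1"
proof -
  have "t * \<bar>c\<bar> \<le> ((1 - c) / (\<bar>c\<bar> + 1)) * \<bar>c\<bar>" by (rule mult_right_mono[OF assms(3)]) simp
  also have "\<dots> \<le> 1 - c"
  proof -
    have "\<bar>c\<bar> / (\<bar>c\<bar> + 1) \<le> 1" by simp
    hence "(1 - c) * (\<bar>c\<bar> / (\<bar>c\<bar> + 1)) \<le> (1 - c) * 1" using assms(1) by (intro mult_left_mono) auto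
    thus ?thesis by simp
  qed
  finally have "t * \<bar>c\<bar> \<le> 1 - c" .
  moreover have "t * c \<le> t * \<bar>c\<bar>" using assms(2) by (simp add: mult_left_mono)
  ultimately show ?thesis by (simp add: algebra_simps)
qed

lemma arith_eps:
  fixes X P m th e lam :: real
  assumes "0 \<le> e" "m > 0" "th > 0" "e * (\<bar>X\<bar> + (m / th) * \<bar>1 - P\<bar>) \<le> 1 - X / m"
    "lam = e * m / th"
  shows "X / m + e * X - lam * P \<le> 1 - lam"
proof -
  have "e * X \<le> e * \<bar>X\<bar>" using assms(1) by (simp add: mult_left_mono)
  moreover have "lam * (1 - P) \<le> e * ((m / th) * \<bar>1 - P\<bar>)"
  proof -
    have "lam * (1 - P) = (e * (m / th)) * (1 - P)" using assms(5) by simp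
    also have "\<dots> \<le> (e * (m / th)) * \<bar>1 - P\<bar>"
      using assms(1-3) by (intro mult_left_mono) auto
    finally show ?thesis by simp
  qed
  ultimately have "X / m + e * X + lam * (1 - P) \<le> X / m + e * (\<bar>X\<bar> + (m / th) * \<bar>1 - P\<bar>)"
    by (simp add: algebra_simps)
  also have "\<dots> \<le> 1" using assms(4) by simp
  finally show ?thesis by (simp add: algebra_simps)
qed

context sympoly2 begin

definition "Exp v \<longleftrightarrow> (\<exists>y\<in>W. v \<bullet> y = m \<and> (\<forall>u\<in>S. u \<noteq> v \<longrightarrow> u \<bullet> y < m))"

lemma face_unique:
  assumes "y \<in> W" "v \<in> S" "v \<bullet> y = m" "\<And>u. u \<in> S \<Longrightarrow> u \<noteq> v \<Longrightarrow> u \<bullet> y < m"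
    "x \<in> C" "x \<bullet> y = m"
  shows "x = v"
proof -
  have hy: "h y = m" using assms(1) by (simp add: W_def)
  define F where "F = C \<inter> {x. y \<bullet> x = m}"
  have le: "\<And>x. x \<in> C \<Longrightarrow> y \<bullet> x \<le> m" using h_ge hy by (metis inner_commute)
  have face: "F face_of C" unfolding F_def by (rule face_of_Int_supporting_hyperplane_le[OF convC le])
  have compF: "compact F" unfolding F_def using compC closed_hyperplane by blast
  have convF: "convex F" using face face_of_imp_convex by blast
  have "{e. e extreme_point_of F} \<subseteq> {v}"
  proof
    fix e assume "e \<in> {e. e extreme_point_of F}"
    hence "e extreme_point_of C" "e \<in> F" using extreme_point_of_face[OF face] by auto
    hence "e \<in> S" "e \<bullet> y = m" by (auto simp: S_def F_def inner_commute)
    thus "e \<in> {v}" using assms(4) by fastforce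
  qed
  hence "convex hull {e. e extreme_point_of F} \<subseteq> {v}"
    by (metis convex_hull_singleton hull_mono)
  moreover have "F = convex hull {e. e extreme_point_of F}" by (rule Krein_Milman_Minkowski[OF compF convF])
  moreover have "x \<in> F" using assms(5,6) by (simp add: F_def inner_commute)
  ultimately show ?thesis by auto
qed

lemma width_mono: assumes "K \<subseteq> C" "K \<noteq> {}" shows "width_fun K y \<le> width_fun C y"
  unfolding width_fun_def[of K]
proof (rule cSup_least)
  show "{y \<bullet> (a - b) |a b. a \<in> K \<and> b \<in> K} \<noteq> {}" using assms(2) by blast
next
  fix x assume "x \<in> {y \<bullet> (a - b) |a b. a \<in> K \<and> b \<in> K}"
  then obtain a b where "a \<in> K" "b \<in> K" "x = y \<bullet> (a - b)" by blast
  thus "x \<le> width_fun C y" using width_ge[of C a b y] assms(1) by auto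
qed

lemma width_nonneg: assumes "K \<subseteq> C" "K \<noteq> {}" shows "0 \<le> width_fun K y"
proof -
  obtain a where "a \<in> K" using assms by blast
  thus ?thesis using width_ge[OF assms(1), of a a y] by simp
qed

lemma E_reduced:
  assumes E: "\<And>v. v \<in> S \<Longrightarrow> Exp v"
  shows "lattice_reduced L C"
  unfolding lattice_reduced_def
proof
  assume "\<exists>K'. convex_body K' \<and> K' \<subset> C \<and> lattice_width L K' = lattice_width L C"
  then obtain K' where K': "convex_body K'" "K' \<subset> C" "lattice_width L K' = 2 * m"
    using lw by auto
  have cK: "compact K'" "convex K'" "interior K' \<noteq> {}" using K'(1) by (auto simp: convex_body_def)
  have Kne: "K' \<noteq> {}" using cK(3) interior_subset by blast
  have "\<not> S \<subseteq> K'"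
  proof
    assume "S \<subseteq> K'"
    hence "convex hull S \<subseteq> K'" using cK(2) by (simp add: hull_minimal)
    thus False using C_hull K'(2) by auto
  qed
  then obtain v where v: "v \<in> S" "v \<notin> K'" by blast
  obtain y where y: "y \<in> W" "v \<bullet> y = m" "\<And>u. u \<in> S \<Longrightarrow> u \<noteq> v \<Longrightarrow> u \<bullet> y < m"
    using E[OF v(1)] unfolding Exp_def by blast
  have hy: "h y = m" using y(1) by (simp add: W_def)
  have "continuous_on K' (\<lambda>x. x \<bullet> y)" by (intro continuous_intros)
  then obtain x1 where x1: "x1 \<in> K'" "\<And>x. x \<in> K' \<Longrightarrow> x \<bullet> y \<le> x1 \<bullet> y"
    using continuous_attains_sup[OF cK(1) Kne] by blast
  have x1C: "x1 \<in> C" using x1(1) K'(2) by blast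
  have "x1 \<bullet> y \<le> m" using h_ge[OF x1C, of y] hy by simp
  moreover have "x1 \<bullet> y \<noteq> m"
  proof
    assume "x1 \<bullet> y = m"
    hence "x1 = v" using face_unique[OF y(1) v(1) y(2) y(3) x1C] by blast
    thus False using x1(1) v(2) by simp
  qed
  ultimately have x1lt: "x1 \<bullet> y < m" by simp
  have "width_fun K' y \<le> x1 \<bullet> y + m"
    unfolding width_fun_def
  proof (rule cSup_least)
    show "{y \<bullet> (a - b) |a b. a \<in> K' \<and> b \<in> K'} \<noteq> {}" using Kne by blast
  next
    fix z assume "z \<in> {y \<bullet> (a - b) |a b. a \<in> K' \<and> b \<in> K'}"
    then obtain a b where ab: "a \<in> K'" "b \<in> K'" "z = y \<bullet> (a - b)" by blast
    have "a \<bullet> y \<le> x1 \<bullet> y" using x1(2)[OF ab(1)] .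
    moreover have "(- b) \<bullet> y \<le> m" using h_ge[OF negC] ab(2) K'(2) hy by auto
    ultimately show "z \<le> x1 \<bullet> y + m" using ab(3) by (simp add: inner_diff_right inner_commute)
  qed
  hence wlt: "width_fun K' y < 2 * m" using x1lt by simp
  have "lattice_width L K' \<le> width_fun K' y"
    unfolding lattice_width_def
  proof (rule cInf_lower)
    show "width_fun K' y \<in> width_fun K' ` (dual_lattice L - {0})" using y(1) by (auto simp: W_def)
    show "bdd_below (width_fun K' ` (dual_lattice L - {0}))"
      using width_nonneg[of K'] K'(2) Kne unfolding bdd_below_def by blast
  qed
  thus False using wlt K'(3) by simp
qed

lemma other_u:
  assumes NE: "\<And>y. y \<in> W \<Longrightarrow> v \<bullet> y = m \<Longrightarrow> \<exists>u\<in>S. u \<noteq> v \<and> m \<le> u \<bullet> y"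
    and y: "y \<in> W"
  shows "\<exists>u\<in>S. u \<noteq> v \<and> u \<bullet> y = m"
proof -
  have hy: "h y = m" using y by (simp add: W_def)
  show ?thesis
  proof (cases "v \<bullet> y = m")
    case True
    then obtain u where u: "u \<in> S" "u \<noteq> v" "m \<le> u \<bullet> y" using NE[OF y] by blast
    have "u \<bullet> y \<le> m" using h_geS[OF u(1), of y] hy by simp
    thus ?thesis using u by force
  next
    case False
    obtain u where "u \<in> S" "u \<bullet> y = h y" using h_att by blast
    thus ?thesis using False hy by force
  qed
qed

lemma reduced_E:
  assumes red: "lattice_reduced L C" and v: "v \<in> S"
  shows "Exp v"
proof (rule ccontr)
  assume nE: "\<not> Exp v"
  have NE: "\<exists>u\<in>S. u \<noteq> v \<and> m \<le> u \<bullet> y" if yy: "y \<in> W" "v \<bullet> y = m" for y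
  proof (rule ccontr)
    assume "\<not> (\<exists>u\<in>S. u \<noteq> v \<and> m \<le> u \<bullet> y)"
    hence "\<forall>u\<in>S. u \<noteq> v \<longrightarrow> u \<bullet> y < m" by (auto simp: not_le)
    hence "Exp v" using yy unfolding Exp_def by blast
    thus False using nE by contradiction
  qed
  obtain a b where ab: "a \<noteq> 0" "\<And>x. x \<in> C \<Longrightarrow> a \<bullet> x \<le> b" "a \<bullet> v = b"
    "\<And>x. x \<in> C \<Longrightarrow> a \<bullet> x = b \<Longrightarrow> x = v" using expose[OF v] by blast
  have vC: "v \<in> C" using v S_sub by blast
  have b0: "b > 0"
  proof -
    have "0 \<le> b" using ab(2)[OF zeroC] by simp
    moreover have "b \<noteq> 0" using ab(4)[OF zeroC] S_nz[OF v] by auto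
    ultimately show ?thesis by simp
  qed
  obtain m2 where m2: "m2 > m" "\<And>y. y \<in> dual_lattice L \<Longrightarrow> y \<noteq> 0 \<Longrightarrow> h y > m \<Longrightarrow> m2 \<le> h y"
    using m2 by blast
  define \<mu> where "\<mu> = m / m2"
  have mu: "0 < \<mu>" "\<mu> < 1" "\<mu> * m2 = m" using m2(1) m_pos by (auto simp: \<mu>_def field_simps)
  have "\<forall>u\<in>S - {v}. 0 < b - a \<bullet> u"
  proof
    fix u assume u: "u \<in> S - {v}"
    hence uC: "u \<in> C" using S_sub by blast
    have "a \<bullet> u \<le> b" using ab(2)[OF uC] .
    moreover have "a \<bullet> u \<noteq> b" using ab(4)[OF uC] u by auto
    ultimately show "0 < b - a \<bullet> u" by simp
  qed
  then obtain e1 where e1: "e1 > 0" "\<And>u. u \<in> S - {v} \<Longrightarrow> e1 \<le> b - a \<bullet> u"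
    using finite_pos_lower[of "S - {v}" "\<lambda>u. b - a \<bullet> u"] S_fin by auto
  define \<eta> where "\<eta> = min e1 ((1 - \<mu>) * b)"
  have eta: "\<eta> > 0" "\<eta> \<le> e1" "\<eta> \<le> (1 - \<mu>) * b" using e1(1) mu b0 by (auto simp: \<eta>_def)
  define K' where "K' = C \<inter> {x. a \<bullet> x \<le> b - \<eta>}"
  have K'C: "K' \<subseteq> C" by (auto simp: K'_def)
  have Su: "u \<in> K'" if "u \<in> S" "u \<noteq> v" for u
    using e1(2)[of u] that eta(2) S_sub by (auto simp: K'_def)
  have muK: "\<mu> *\<^sub>R u \<in> K'" if "u \<in> C" for u
  proof -
    have "(1 - \<mu>) *\<^sub>R 0 + \<mu> *\<^sub>R u \<in> C"
      using convexD[OF convC zeroC that, of "1 - \<mu>" \<mu>] mu by simp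
    hence "\<mu> *\<^sub>R u \<in> C" by simp
    moreover have "a \<bullet> (\<mu> *\<^sub>R u) \<le> b - \<eta>"
    proof -
      have "a \<bullet> (\<mu> *\<^sub>R u) = \<mu> * (a \<bullet> u)" by simp
      also have "\<dots> \<le> \<mu> * b" using ab(2)[OF that] mu(1) by (simp add: mult_left_mono)
      also have "\<dots> \<le> b - \<eta>" using eta(3) by (simp add: algebra_simps)
      finally show ?thesis .
    qed
    ultimately show ?thesis by (simp add: K'_def)
  qed
  have zK: "0 \<in> K'" using muK[OF zeroC] by simp
  have Kne: "K' \<noteq> {}" using zK by blast
  have body: "convex_body K'"
  proof -
    have "compact K'" unfolding K'_def using compC closed_halfspace_le by blast
    moreover have "convex K'" unfolding K'_def using convC convex_halfspace_le by (rule convex_Int)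
    moreover have "0 \<in> interior K'"
    proof -
      have "interior K' = interior C \<inter> {x. a \<bullet> x < b - \<eta>}"
        unfolding K'_def using ab(1) by simp
      moreover have "(0::'a) \<in> {x. a \<bullet> x < b - \<eta>}" using eta(3) mu b0
        by (simp add: algebra_simps) (smt (verit) mult_pos_pos)
      ultimately show ?thesis using zero_int by simp
    qed
    ultimately show ?thesis by (auto simp: convex_body_def)
  qed
  have "v \<notin> K'" using ab(3) eta(1) by (simp add: K'_def)
  hence strict: "K' \<subset> C" using K'C vC by blast
  have wlow: "2 * m \<le> width_fun K' y" if y: "y \<in> dual_lattice L" "y \<noteq> 0" for y
  proof (cases "h y = m")
    case True
    hence yW: "y \<in> W" using y by (simp add: W_def)
    obtain u1 where u1: "u1 \<in> S" "u1 \<noteq> v" "u1 \<bullet> y = m" using other_u[OF NE yW] by blast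
    obtain u2 where u2: "u2 \<in> S" "u2 \<noteq> v" "u2 \<bullet> (- y) = m" using other_u[OF NE W_neg[OF yW]] by blast
    have "y \<bullet> (u1 - u2) \<le> width_fun K' y" using width_ge[OF K'C Su[OF u1(1,2)] Su[OF u2(1,2)]] .
    moreover have "y \<bullet> (u1 - u2) = 2 * m" using u1(3) u2(3) by (simp add: inner_diff_right inner_commute)
    ultimately show ?thesis by simp
  next
    case False
    hence "h y > m" using m_le[OF y] by simp
    hence hy: "m2 \<le> h y" using m2(2)[OF y] by blast
    obtain u where u: "u \<in> S" "u \<bullet> y = h y" using h_att by blast
    have uC: "u \<in> C" "- u \<in> C" using u(1) S_sub negC by auto
    have "y \<bullet> (\<mu> *\<^sub>R u - \<mu> *\<^sub>R (- u)) \<le> width_fun K' y"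
      using width_ge[OF K'C muK[OF uC(1)] muK[OF uC(2)]] .
    moreover have "y \<bullet> (\<mu> *\<^sub>R u - \<mu> *\<^sub>R (- u)) = 2 * (\<mu> * h y)"
      using u(2) by (simp add: inner_diff_right inner_add_right inner_commute)
    moreover have "\<mu> * m2 \<le> \<mu> * h y" using hy mu(1) by (simp add: mult_left_mono)
    ultimately show ?thesis using mu(3) by simp
  qed
  have "lattice_width L K' = 2 * m"
    unfolding lattice_width_def
  proof (rule cInf_eq_minimum)
    obtain y0 where y0: "y0 \<in> dual_lattice L" "y0 \<noteq> 0" "h y0 = m" using m_att by blast
    have "width_fun K' y0 \<le> 2 * m" using width_mono[OF K'C Kne, of y0] y0(3) by (simp add: width_C)
    hence "width_fun K' y0 = 2 * m" using wlow[OF y0(1,2)] by simp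
    thus "2 * m \<in> width_fun K' ` (dual_lattice L - {0})" using y0 by force
  next
    fix x assume "x \<in> width_fun K' ` (dual_lattice L - {0})"
    then obtain y where "y \<in> dual_lattice L" "y \<noteq> 0" "x = width_fun K' y" by blast
    thus "2 * m \<le> x" using wlow by simp
  qed
  hence "lattice_width L K' = lattice_width L C" using lw by simp
  thus False using red body strict unfolding lattice_reduced_def by blast
qed

end

context sympoly2 begin

lemma E_complete:
  assumes E: "\<And>v. v \<in> S \<Longrightarrow> Exp v"
  shows "lattice_complete (dual_lattice L) (polar C)"
  unfolding lattice_complete_def
proof
  assume "\<exists>K'. convex_body K' \<and> polar C \<subset> K' \<and>
     lattice_diameter (dual_lattice L) K' = lattice_diameter (dual_lattice L) (polar C)"
  then obtain K' where K': "convex_body K'" "polar C \<subset> K'" "lattice_diameter (dual_lattice L) K' = 2 / m"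
    using diam_polar by auto
  have cK: "compact K'" "convex K'" using K'(1) by (auto simp: convex_body_def)
  obtain p where p: "p \<in> K'" "p \<notin> polar C" using K'(2) by blast
  obtain v where v: "v \<in> S" "1 < v \<bullet> p" using p(2) unfolding polar_eq by (auto simp: not_le)
  obtain y where y: "y \<in> W" "v \<bullet> y = m" "\<And>u. u \<in> S \<Longrightarrow> u \<noteq> v \<Longrightarrow> u \<bullet> y < m"
    using E[OF v(1)] unfolding Exp_def by blast
  define th where "th = v \<bullet> p - 1"
  have th: "th > 0" using v(2) by (simp add: th_def)
  define B where "B = (\<lambda>u. \<bar>u \<bullet> y\<bar> + (m / th) * \<bar>1 - u \<bullet> p\<bar>)"
  have B0: "B u \<ge> 0" for u unfolding B_def using m_pos th by simp
  have "\<forall>u\<in>S - {v}. 0 < (1 - (u \<bullet> y) / m) / (B u + 1)"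
  proof
    fix u assume "u \<in> S - {v}"
    hence "u \<bullet> y < m" using y(3) by blast
    hence "0 < 1 - (u \<bullet> y) / m" using m_pos by (simp add: field_simps)
    thus "0 < (1 - (u \<bullet> y) / m) / (B u + 1)" using B0[of u] by simp
  qed
  then obtain e2 where e2: "e2 > 0" "\<And>u. u \<in> S - {v} \<Longrightarrow> e2 \<le> (1 - (u \<bullet> y) / m) / (B u + 1)"
    using finite_pos_lower[of "S - {v}" "\<lambda>u. (1 - (u \<bullet> y) / m) / (B u + 1)"] S_fin by auto
  define \<epsilon> where "\<epsilon> = min e2 (th / (2 * m))"
  have eps: "\<epsilon> > 0" "\<epsilon> \<le> e2" "\<epsilon> \<le> th / (2 * m)" using e2(1) th m_pos by (auto simp: \<epsilon>_def)
  define lam where "lam = \<epsilon> * m / th"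
  have lam: "0 < lam" "lam \<le> 1/2" 
  proof -
    show "0 < lam" using eps(1) m_pos th by (simp add: lam_def)
    have "\<epsilon> * m \<le> (th / (2 * m)) * m" by (rule mult_right_mono[OF eps(3)]) (use m_pos in simp)
    also have "\<dots> = th / 2" using m_pos by simp
    finally show "lam \<le> 1/2" using th by (simp add: lam_def field_simps)
  qed
  define q where "q = (1/m) *\<^sub>R y + \<epsilon> *\<^sub>R y"
  define w where "w = q - lam *\<^sub>R p"
  define z where "z = (1 / (1 - lam)) *\<^sub>R w"
  have uw: "u \<bullet> w \<le> 1 - lam" if u: "u \<in> S" for u
  proof (cases "u = v")
    case True
    have "v \<bullet> w = 1 + \<epsilon> * m - lam * (1 + th)"
      using y(2) m_pos by (simp add: w_def q_def inner_diff_right inner_add_right th_def)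
    also have "lam * th = \<epsilon> * m" using th by (simp add: lam_def)
    hence "1 + \<epsilon> * m - lam * (1 + th) = 1 - lam" by (simp add: algebra_simps)
    finally show ?thesis using True by simp
  next
    case False
    have "\<epsilon> * B u \<le> e2 * B u" using eps(2) B0 by (simp add: mult_right_mono)
    also have "\<dots> \<le> ((1 - (u \<bullet> y) / m) / (B u + 1)) * B u"
    proof -
      have "e2 \<le> (1 - (u \<bullet> y) / m) / (B u + 1)" using e2(2)[of u] u False by blast
      thus ?thesis by (rule mult_right_mono) (rule B0)
    qed
    also have "\<dots> \<le> 1 - (u \<bullet> y) / m"
    proof -
      have "0 \<le> 1 - (u \<bullet> y) / m" using y(3)[OF u False] m_pos by (simp add: field_simps)
      moreover have "B u / (B u + 1) \<le> 1" using B0[of u] by simp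
      ultimately have "(1 - (u \<bullet> y) / m) * (B u / (B u + 1)) \<le> (1 - (u \<bullet> y) / m) * 1"
        by (intro mult_left_mono) auto
      thus ?thesis by simp
    qed
    finally have "\<epsilon> * (\<bar>u \<bullet> y\<bar> + (m / th) * \<bar>1 - u \<bullet> p\<bar>) \<le> 1 - (u \<bullet> y) / m"
      by (simp add: B_def)
    hence "(u \<bullet> y) / m + \<epsilon> * (u \<bullet> y) - lam * (u \<bullet> p) \<le> 1 - lam"
      using arith_eps[of \<epsilon> m th "u \<bullet> y" "u \<bullet> p" lam] eps(1) m_pos th lam_def by simp
    moreover have "u \<bullet> w = (u \<bullet> y) / m + \<epsilon> * (u \<bullet> y) - lam * (u \<bullet> p)"
      by (simp add: w_def q_def inner_diff_right inner_add_right)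
    ultimately show ?thesis by simp
  qed
  have zP: "z \<in> polar C"
    unfolding polar_eq
  proof (intro CollectI ballI)
    fix u assume "u \<in> S"
    have "u \<bullet> z = (u \<bullet> w) / (1 - lam)" by (simp add: z_def)
    also have "\<dots> \<le> 1" using uw[OF \<open>u \<in> S\<close>] lam by (simp add: pos_divide_le_eq)
    finally show "u \<bullet> z \<le> 1" .
  qed
  have "(1 - lam) *\<^sub>R z + lam *\<^sub>R p = q" using lam by (simp add: z_def w_def)
  moreover have "(1 - lam) *\<^sub>R z + lam *\<^sub>R p \<in> K'"
    using convexD[OF cK(2) _ p(1), of z "1 - lam" lam] zP K'(2) lam by auto
  ultimately have qK: "q \<in> K'" by simp
  have aK: "- (1/m) *\<^sub>R y \<in> K'" using W_polar_seg[OF y(1)] ends_in_segment K'(2) by blast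
  have seg: "closed_segment (- (1/m) *\<^sub>R y) q \<subseteq> K'" using closed_segment_subset[OF aK qK cK(2)] .
  have d1: "q - - (1/m) *\<^sub>R y = ((1/m) + \<epsilon> + (1/m)) *\<^sub>R y"
    by (simp only: q_def scaleR_add_left scaleR_minus_left diff_minus_eq_add)
  have d2: "(1/m) + \<epsilon> + (1/m) = 2/m + \<epsilon>" by simp
  have diff: "q - - (1/m) *\<^sub>R y = (2/m + \<epsilon>) *\<^sub>R y" using d1 d2 by simp
  have "2/m > 0" using m_pos by simp
  hence pos: "2/m + \<epsilon> > 0" using eps(1) by linarith
  have "lattice_length (dual_lattice L) (- (1/m) *\<^sub>R y) q \<le> lattice_diameter (dual_lattice L) K'"
    using diam_ge[OF compact_imp_bounded[OF cK(1)] seg len_W(3)[OF y(1) pos diff] len_W(2)[OF y(1) pos diff]] .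
  hence "2/m + \<epsilon> \<le> 2/m" using len_W(1)[OF y(1) pos diff] K'(3) by simp
  thus False using eps(1) by simp
qed

lemma other_u2:
  assumes NE: "\<And>y. y \<in> W \<Longrightarrow> v \<bullet> y = m \<Longrightarrow> \<exists>u\<in>S. u \<noteq> v \<and> m \<le> u \<bullet> y"
    and g: "g \<in> W"
  shows "\<exists>u\<in>S. u \<noteq> v \<and> - u \<noteq> v \<and> u \<bullet> g = m"
proof -
  have hg: "h g = m" using g by (simp add: W_def)
  obtain u0 where u0: "u0 \<in> S" "u0 \<bullet> g = m" using h_att hg by metis
  show ?thesis
  proof (cases "u0 = v")
    case True
    obtain u where u: "u \<in> S" "u \<noteq> v" "u \<bullet> g = m" using other_u[OF NE g] by blast
    have "- u \<noteq> v"
    proof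
      assume "- u = v"
      hence "u = - v" by (metis minus_minus)
      hence "u \<bullet> g = - (u0 \<bullet> g)" using True by simp
      hence "u \<bullet> g = - m" using u0(2) by simp
      thus False using u(3) m_pos by simp
    qed
    thus ?thesis using u by blast
  next
    case False
    show ?thesis
    proof (cases "- u0 = v")
      case False2: True
      have "v \<bullet> (- g) = (- u0) \<bullet> (- g)" using False2 by simp
      also have "\<dots> = u0 \<bullet> g" by simp
      finally have vg: "v \<bullet> (- g) = m" using u0(2) by simp
      obtain u where u: "u \<in> S" "u \<noteq> v" "u \<bullet> (- g) = m" using other_u[OF NE W_neg[OF g]] by blast
      have "- (- u) \<noteq> v"
      proof
        assume "- (- u) = v"
        hence "u = v" by simp
        thus False using u(2) by simp
      qed
      moreover have "- u \<noteq> v"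
      proof
        assume "- u = v"
        have "u \<bullet> (- g) = (- u) \<bullet> g" by simp
        also have "\<dots> = v \<bullet> g" using \<open>- u = v\<close> by simp
        also have "\<dots> = - (v \<bullet> (- g))" by simp
        finally have "u \<bullet> (- g) = - m" using vg by simp
        thus False using u(3) m_pos by simp
      qed
      moreover have "(- u) \<bullet> g = m" using u(3) by simp
      ultimately show ?thesis using S_sym[OF u(1)] by blast
    next
      case False3: False
      thus ?thesis using False u0 by blast
    qed
  qed
qed

lemma complete_E:
  assumes comp: "lattice_complete (dual_lattice L) (polar C)" and v: "v \<in> S"
  shows "Exp v"
proof (rule ccontr)
  assume nE: "\<not> Exp v"
  have NE: "\<exists>u\<in>S. u \<noteq> v \<and> m \<le> u \<bullet> y" if yy: "y \<in> W" "v \<bullet> y = m" for y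
  proof (rule ccontr)
    assume "\<not> (\<exists>u\<in>S. u \<noteq> v \<and> m \<le> u \<bullet> y)"
    hence "\<forall>u\<in>S. u \<noteq> v \<longrightarrow> u \<bullet> y < m" by (auto simp: not_le)
    hence "Exp v" using yy unfolding Exp_def by blast
    thus False using nE by contradiction
  qed
  obtain a b where ab: "a \<noteq> 0" "\<And>x. x \<in> C \<Longrightarrow> a \<bullet> x \<le> b" "a \<bullet> v = b"
    "\<And>x. x \<in> C \<Longrightarrow> a \<bullet> x = b \<Longrightarrow> x = v" using expose[OF v] by blast
  have b0: "b > 0"
  proof -
    have "0 \<le> b" using ab(2)[OF zeroC] by simp
    moreover have "b \<noteq> 0" using ab(4)[OF zeroC] S_nz[OF v] by auto
    ultimately show ?thesis by simp
  qed
  define z0 where "z0 = (1 / b) *\<^sub>R a"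
  have vz0: "v \<bullet> z0 = 1" using ab(3) b0 by (simp add: z0_def inner_commute)
  have uz0: "u \<bullet> z0 < 1" if "u \<in> S - {v}" for u
  proof -
    have uC: "u \<in> C" using that S_sub by blast
    have "a \<bullet> u < b" using ab(2)[OF uC] ab(4)[OF uC] that by force
    thus ?thesis using b0 by (simp add: z0_def inner_commute field_simps)
  qed
  obtain m2 where m2: "m2 > m" "\<And>y. y \<in> dual_lattice L \<Longrightarrow> y \<noteq> 0 \<Longrightarrow> h y > m \<Longrightarrow> m2 \<le> h y"
    using m2 by blast
  have "\<forall>u\<in>S - {v}. 0 < (1 - u \<bullet> z0) / (\<bar>u \<bullet> z0\<bar> + 1)"
    using uz0 by (simp add: add_pos_nonneg)
  then obtain e3 where e3: "e3 > 0" "\<And>u. u \<in> S - {v} \<Longrightarrow> e3 \<le> (1 - u \<bullet> z0) / (\<bar>u \<bullet> z0\<bar> + 1)"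
    using finite_pos_lower[of "S - {v}" "\<lambda>u. (1 - u \<bullet> z0) / (\<bar>u \<bullet> z0\<bar> + 1)"] S_fin by auto
  define t where "t = min e3 (2 * m2 / m - 2)"
  have t0: "2 * m2 / m - 2 > 0" using m2(1) m_pos by (simp add: field_simps)
  have t: "t > 0" "t \<le> e3" "2 + t \<le> 2 * m2 / m" using e3(1) t0 by (auto simp: t_def)
  define p where "p = (1 + t) *\<^sub>R z0"
  define \<beta> where "\<beta> = (\<lambda>u. if u = v then 1 + t else (1::real))"
  have pb: "u \<bullet> p \<le> \<beta> u" if "u \<in> S" for u
  proof (cases "u = v")
    case True thus ?thesis using vz0 by (simp add: p_def \<beta>_def)
  next
    case False
    hence "(1 + t) * (u \<bullet> z0) \<le> 1"
      using arith_cut[of "u \<bullet> z0" t] uz0[of u] e3(2)[of u] t that by auto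
    thus ?thesis using False by (simp add: p_def \<beta>_def)
  qed
  define K where "K = convex hull (insert p (polar C))"
  have Kb: "u \<bullet> x \<le> \<beta> u" if "u \<in> S" "x \<in> K" for u x
  proof -
    have "insert p (polar C) \<subseteq> {x. u \<bullet> x \<le> \<beta> u}"
    proof
      fix x assume "x \<in> insert p (polar C)"
      moreover have "1 \<le> \<beta> u" using t by (simp add: \<beta>_def)
      ultimately show "x \<in> {x. u \<bullet> x \<le> \<beta> u}" using pb[OF that(1)] that(1) unfolding polar_eq by auto
    qed
    hence "K \<subseteq> {x. u \<bullet> x \<le> \<beta> u}" unfolding K_def by (rule hull_minimal) (rule convex_halfspace_le)
    thus ?thesis using that(2) by blast
  qed
  have PK: "polar C \<subseteq> K" unfolding K_def by (meson hull_subset subset_insertI subset_trans)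
  have pK: "p \<in> K" unfolding K_def by (meson hull_subset insertI1 subsetD)
  have pnot: "p \<notin> polar C"
  proof
    assume "p \<in> polar C"
    hence "v \<bullet> p \<le> 1" using v unfolding polar_eq by blast
    thus False using vz0 t(1) by (simp add: p_def)
  qed
  have body: "convex_body K"
  proof -
    have "compact K" unfolding K_def using polar_compact by (simp add: compact_convex_hull)
    moreover have "convex K" unfolding K_def by simp
    moreover have "interior K \<noteq> {}"
      using polar_body interior_mono[OF PK] unfolding convex_body_def by blast
    ultimately show ?thesis by (simp add: convex_body_def)
  qed
  have strict: "polar C \<subset> K" using PK pK pnot by blast
  have "lattice_diameter (dual_lattice L) K = 2 / m"
  proof -
    obtain y0 where y0: "y0 \<in> W" using m_att by (auto simp: W_def)
    show ?thesis
    proof (rule diam_eq[OF subset_trans[OF W_polar_seg[OF y0] PK] W_polar_len(3)[OF y0] W_polar_len(2)[OF y0] W_polar_len(1)[OF y0]])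
      fix a' b' assume ab': "closed_segment a' b' \<subseteq> K" "a' \<noteq> b'" "lattice_segment (dual_lattice L) a' b'"
      obtain g s where gs: "g \<in> dual_lattice L" "g \<noteq> 0" "s > 0" "b' - a' = s *\<^sub>R g"
        "lattice_length (dual_lattice L) a' b' = s" using seg_len[OF ab'(2,3)] by blast
      have abK: "a' \<in> K" "b' \<in> K" using ab'(1) ends_in_segment by blast+
      have key: "s * (u \<bullet> g) = u \<bullet> b' + (- u) \<bullet> a'" for u
      proof -
        have "s * (u \<bullet> g) = u \<bullet> (b' - a')" using gs(4) by simp
        thus ?thesis by (simp add: inner_diff_right)
      qed
      have "s \<le> 2 / m"
      proof (cases "h g = m")
        case True
        hence gW: "g \<in> W" using gs(1,2) by (simp add: W_def)
        obtain u where u: "u \<in> S" "u \<noteq> v" "- u \<noteq> v" "u \<bullet> g = m" using other_u2[OF NE gW] by blast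
        have "u \<bullet> b' \<le> 1" using Kb[OF u(1) abK(2)] u(2) by (simp add: \<beta>_def)
        moreover have "(- u) \<bullet> a' \<le> 1" using Kb[OF S_sym[OF u(1)] abK(1)] u(3) by (simp add: \<beta>_def)
        ultimately have "s * m \<le> 2" using key[of u] u(4) by simp
        thus ?thesis using m_pos by (simp add: field_simps)
      next
        case False
        hence "h g > m" using m_le[OF gs(1,2)] by simp
        hence hg: "m2 \<le> h g" using m2(2)[OF gs(1,2)] by blast
        obtain u where u: "u \<in> S" "u \<bullet> g = h g" using h_att by blast
        have "u \<bullet> b' \<le> \<beta> u" "(- u) \<bullet> a' \<le> \<beta> (- u)" using Kb[OF u(1) abK(2)] Kb[OF S_sym[OF u(1)] abK(1)] by auto
        moreover have "\<beta> u + \<beta> (- u) \<le> 2 + t"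
        proof -
          have "u \<noteq> - u"
          proof
            assume uu: "u = - u"
            have "2 *\<^sub>R u = u + u" by (rule scaleR_2)
            also have "\<dots> = u + - u" by (rule arg_cong[where f="\<lambda>x. u + x"]) (rule uu)
            also have "\<dots> = 0" by (rule right_minus)
            finally have "2 *\<^sub>R u = 0" .
            thus False using S_nz[OF u(1)] by simp
          qed
          hence "u \<noteq> v \<or> - u \<noteq> v" by auto
          thus ?thesis using t(1) by (auto simp: \<beta>_def)
        qed
        ultimately have "s * h g \<le> 2 + t" using key[of u] u(2) by simp
        moreover have "s * m2 \<le> s * h g" using hg gs(3) by (simp add: mult_left_mono)
        ultimately have "s * m2 \<le> 2 * m2 / m" using t(3) by linarith
        hence "s * m2 \<le> (2 / m) * m2" by simp
        thus ?thesis using mult_right_le_imp_le[of s m2 "2 / m"] m2(1) m_pos by simp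
      qed
      thus "lattice_length (dual_lattice L) a' b' \<le> 2 / m" using gs(5) by simp
    qed
  qed
  hence "lattice_diameter (dual_lattice L) K = lattice_diameter (dual_lattice L) (polar C)"
    using diam_polar by simp
  thus False using comp body strict unfolding lattice_complete_def by blast
qed

end

theorem theorem3p8:
  fixes C :: "'a::euclidean_space set" and \<Lambda> :: "'a set"
  assumes "polytope C" and "interior C \<noteq> {}" and "\<forall>x\<in>C. - x \<in> C"
    and "is_lattice \<Lambda>"
  shows "width_directions \<Lambda> C = diameter_directions (dual_lattice \<Lambda>) (polar C) \<and>
         (lattice_reduced \<Lambda> C \<longleftrightarrow> lattice_complete (dual_lattice \<Lambda>) (polar C))"
proof -
  interpret sympoly C \<Lambda> using assms by (unfold_locales) auto
  show ?thesis
  proof (cases "\<exists>y\<in>dual_lattice \<Lambda>. y \<noteq> 0")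
    case True
    obtain m where m: "m > 0" "\<forall>y\<in>dual_lattice \<Lambda>. y \<noteq> 0 \<longrightarrow> m \<le> h y"
      "\<exists>y\<in>dual_lattice \<Lambda>. y \<noteq> 0 \<and> h y = m" using exists_m[OF True] by blast
    interpret s2: sympoly2 C \<Lambda> m by unfold_locales (use m in auto)
    have "lattice_reduced \<Lambda> C \<longleftrightarrow> (\<forall>v\<in>S. s2.Exp v)" using s2.E_reduced s2.reduced_E by blast
    moreover have "lattice_complete (dual_lattice \<Lambda>) (polar C) \<longleftrightarrow> (\<forall>v\<in>S. s2.Exp v)"
      using s2.E_complete s2.complete_E by blast
    ultimately show ?thesis using s2.wd s2.dd by simp
  next
    case False
    hence D0: "dual_lattice \<Lambda> - {0} = {}" by blast
    have wd: "width_directions \<Lambda> C = {}" unfolding width_directions_def using D0 by blast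
    have dd: "diameter_directions (dual_lattice \<Lambda>) (polar C) = {}"
      unfolding diameter_directions_def using D0 by blast
    obtain e :: 'a where e: "e \<in> Basis" using nonempty_Basis by blast
    have ne: "norm e = 1" using e by simp
    have nred: "\<not> lattice_reduced \<Lambda> C"
    proof -
      obtain r where r: "r > 0" "ball 0 r \<subseteq> C" using ball0 by blast
      define K' where "K' = cball (0::'a) (r/2)"
      have "convex_body K'" unfolding K'_def convex_body_def using r(1) by auto
      moreover have "K' \<subseteq> C" unfolding K'_def using r by auto
      moreover have "(3 * r / 4) *\<^sub>R e \<in> C" "(3 * r / 4) *\<^sub>R e \<notin> K'"
        using r ne by (auto simp: K'_def subset_iff)
      moreover have "lattice_width \<Lambda> K' = lattice_width \<Lambda> C" by (simp add: lattice_width_def D0)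
      ultimately show ?thesis unfolding lattice_reduced_def by blast
    qed
    have ncomp: "\<not> lattice_complete (dual_lattice \<Lambda>) (polar C)"
    proof -
      obtain Rp where Rp: "Rp > 0" "\<And>z. z \<in> polar C \<Longrightarrow> norm z \<le> Rp" using polar_bound by blast
      define K' where "K' = cball (0::'a) (Rp + 1)"
      have "convex_body K'" unfolding K'_def convex_body_def using Rp(1)
        by (auto intro!: exI[of _ 0])
      moreover have "polar C \<subseteq> K'" unfolding K'_def using Rp by fastforce
      moreover have "(Rp + 1) *\<^sub>R e \<in> K'" "(Rp + 1) *\<^sub>R e \<notin> polar C"
        using Rp ne by (auto simp: K'_def dest: Rp(2))
      moreover have nls: "\<And>a b. \<not> lattice_segment (dual_lattice \<Lambda>) a b"
        using D0 by (auto simp: lattice_segment_def)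
      have "lattice_diameter (dual_lattice \<Lambda>) K' = lattice_diameter (dual_lattice \<Lambda>) (polar C)"
        by (simp add: lattice_diameter_def nls)
      ultimately show ?thesis unfolding lattice_complete_def by blast
    qed
    show ?thesis using wd dd nred ncomp by simp
  qed
qed

end
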